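(* Let $d\ge1$, let $y\in\mathbb{R}^d$ satisfy $\|y\|_\infty\le 1/2$, and let $q\ge d+2\pi$. Then $$\sum_{x\in\mathbb{Z}^d\setminus\{0\}}\frac{1}{\|x+y\|^q}\le\Big[(1+\sqrt d)\sqrt{d+3}\Big]^q,$$ where $\|\cdot\|$ is the Euclidean norm. *)

theory Defs
  imports "HOL-Analysis.Analysis"
begin

end

theory Submission
  imports Defs
begin

definition lbox :: "nat \<Rightarrow> (real ^ 'n) set" where
  "lbox M = {x. \<forall>i. x $ i \<in> \<int> \<and> \<bar>x $ i\<bar> \<le> real M}"

lemma box_fin_card:
  "finite (lbox M :: (real ^ 'n) set) \<and> card (lbox M :: (real ^ 'n) set) \<le> (2*M+1) ^ CARD('n)"
proof -
  define A where "A = real_of_int ` {-int M..int M}"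
  have cA: "card A \<le> 2*M+1" unfolding A_def
    using card_image_le[of "{-int M..int M}" real_of_int] by simp
  have fA: "finite A" unfolding A_def by simp
  have sub: "(lbox M :: (real ^ 'n) set) \<subseteq> (\<lambda>f. vec_lambda f) ` (PiE UNIV (\<lambda>_. A))"
  proof
    fix x :: "real ^ 'n" assume "x \<in> lbox M"
    hence h: "\<And>i. x $ i \<in> \<int> \<and> \<bar>x $ i\<bar> \<le> real M" unfolding lbox_def by auto
    have "\<And>i. x $ i \<in> A"
    proof -
      fix i
      from h[of i] obtain k where k: "x $ i = of_int k" by (auto elim: Ints_cases)
      with h[of i] have "k \<in> {-int M..int M}" by auto
      thus "x $ i \<in> A" unfolding A_def using k by auto
    qed
    hence "(\<lambda>i. x $ i) \<in> PiE UNIV (\<lambda>_. A)" by auto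
    moreover have "x = vec_lambda (\<lambda>i. x $ i)" by simp
    ultimately show "x \<in> (\<lambda>f. vec_lambda f) ` (PiE UNIV (\<lambda>_. A))" by blast
  qed
  have fP: "finite (PiE (UNIV::'n set) (\<lambda>_. A))" using fA by (simp add: finite_PiE)
  have "card (lbox M :: (real ^ 'n) set) \<le> card ((\<lambda>f. vec_lambda f) ` (PiE (UNIV::'n set) (\<lambda>_. A)))"
    by (rule card_mono) (use fP sub in auto)
  also have "\<dots> \<le> card (PiE (UNIV::'n set) (\<lambda>_. A))" by (rule card_image_le[OF fP])
  also have "\<dots> = card A ^ CARD('n)" by (simp add: card_PiE)
  also have "\<dots> \<le> (2*M+1) ^ CARD('n)" by (rule power_mono[OF cA]) simp
  finally show ?thesis using sub fP finite_subset by blast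
qed

lemma inv_sq_sum: "M \<ge> 1 \<Longrightarrow> (\<Sum>m=1..M. 1/(real m)^2) \<le> 2 - 1/real M"
proof (induction M rule: nat_induct_at_least)
  case base then show ?case by simp
next
  case (Suc M)
  have "1/(real M + 1)^2 \<le> 1/(real M * (real M + 1))"
    using Suc.hyps by (intro frac_le) (auto simp: power2_eq_square)
  also have "\<dots> = 1/real M - 1/(real M + 1)"
    using Suc.hyps by (simp add: field_simps)
  finally have "1/(real M + 1)^2 \<le> 1/real M - 1/(real M + 1)" .
  with Suc.IH show ?case by (simp add: add.commute)
qed

lemma final_ineq:
  fixes d :: nat and q :: real
  assumes "d \<ge> 1" "q \<ge> real d + 2 * pi"
  shows "2 powr q * 3 ^ d * 2 \<le> ((1 + sqrt (real d)) * sqrt (real d + 3)) powr q"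
proof -
  have q6: "q \<ge> real d + 6" using assms pi_gt3 by linarith
  have "sqrt (real d) * sqrt (real d + 3) = sqrt (real d * (real d + 3))"
    by (simp add: real_sqrt_mult)
  also have "\<dots> \<ge> sqrt ((real d + 1)^2)"
    using assms(1) by (intro real_sqrt_le_mono) (simp add: power2_eq_square field_simps)
  finally have s1: "sqrt (real d) * sqrt (real d + 3) \<ge> real d + 1" by simp
  have s2: "sqrt (real d + 3) \<ge> 2"
    using real_sqrt_le_mono[of 4 "real d + 3"] assms(1) by simp
  have B: "(1 + sqrt (real d)) * sqrt (real d + 3) \<ge> real d + 3"
    using s1 s2 by (simp add: distrib_right)
  have nat_ineq: "128 * 6 ^ d \<le> (d+3) ^ (d+6)"
  proof (cases "d \<le> 2")
    case True
    with assms(1) have "d = 1 \<or> d = 2" by auto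
    thus ?thesis by auto
  next
    case False
    have "6 ^ d \<le> (d+3) ^ d" using False by (intro power_mono) auto
    moreover have "(128::nat) \<le> 6^6" by simp
    moreover have "(6::nat)^6 \<le> (d+3)^6" using False by (intro power_mono) auto
    ultimately have "128 * 6 ^ d \<le> (d+3)^6 * (d+3)^d" by (intro mult_mono) auto
    thus ?thesis by (simp add: power_add mult.commute)
  qed
  hence "real (128 * 6 ^ d) \<le> real ((d+3) ^ (d+6))" by linarith
  hence ni: "128 * 6 ^ d \<le> (real d + 3) ^ (d+6)" by simp
  have "2 * 3 ^ d \<le> ((real d + 3)/2) ^ (d+6)"
  proof -
    have "(2 * 3 ^ d) * 2 ^ (d+6) = (128 * 6 ^ d :: real)"
      by (simp add: power_add power_mult_distrib[symmetric])
    also have "\<dots> \<le> (real d + 3) ^ (d+6)" by (rule ni)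
    finally show ?thesis by (simp add: power_divide field_simps)
  qed
  also have "((real d + 3)/2) ^ (d+6) = ((real d + 3)/2) powr (real (d+6))"
    by (subst powr_realpow) auto
  also have "\<dots> \<le> ((real d + 3)/2) powr q"
    by (rule powr_mono) (use q6 in auto)
  finally have m: "2 * 3 ^ d \<le> ((real d + 3)/2) powr q" .
  have e: "2 * ((real d + 3)/2) = real d + 3" by simp
  have "2 powr q * 3 ^ d * 2 = 2 powr q * (2 * 3 ^ d)" by simp
  also have "\<dots> \<le> 2 powr q * ((real d + 3)/2) powr q"
    by (rule mult_left_mono[OF m]) simp
  also have "\<dots> = (2 * ((real d + 3)/2)) powr q" by (rule powr_mult[symmetric])
  also have "\<dots> = (real d + 3) powr q" using e by (simp only:)
  also have "\<dots> \<le> ((1 + sqrt (real d)) * sqrt (real d + 3)) powr q"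
    by (rule powr_mono2) (use B q6 in auto)
  finally show ?thesis .
qed


theorem mainTheorem6:
  fixes y :: "real ^ 'n" and q :: real
  assumes "\<forall>i. \<bar>y $ i\<bar> \<le> 1/2"
    and "q \<ge> real CARD('n) + 2 * pi"
  shows "(\<lambda>x. 1 / norm (x + y) powr q) summable_on ({x. \<forall>i. x $ i \<in> \<int>} - {0})
    \<and> (\<Sum>\<^sub>\<infinity>x \<in> {x. \<forall>i. x $ i \<in> \<int>} - {0}. 1 / norm (x + y) powr q)
        \<le> ((1 + sqrt (real CARD('n))) * sqrt (real CARD('n) + 3)) powr q"
proof -
  define d where "d = CARD('n)"
  define L where "L = {x::real^'n. \<forall>i. x$i \<in> \<int>} - {0}"
  define g where "g = (\<lambda>x::real^'n. 1 / norm (x + y) powr q)"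
  define K where "K = 2 powr q * 3^d"
  have d1: "d \<ge> 1" unfolding d_def by simp
  have q2: "q \<ge> real d + 2" using assms(2) pi_gt3 unfolding d_def by linarith
  have gnn: "g x \<ge> 0" for x by (simp add: g_def)
  have Knn: "K \<ge> 0" unfolding K_def by simp
  have mono: "(lbox M :: (real^'n) set) \<subseteq> lbox (Suc M)" for M 
  proof
    fix x :: "real^'n" assume "x \<in> lbox M"
    hence "\<forall>i. x$i \<in> \<int> \<and> \<bar>x$i\<bar> \<le> real M" unfolding lbox_def by simp
    hence "\<forall>i. x$i \<in> \<int> \<and> \<bar>x$i\<bar> \<le> real (Suc M)" by (smt (verit) of_nat_Suc)
    thus "x \<in> lbox (Suc M)" unfolding lbox_def by simp
  qed
  have z: "(0::real^'n) \<in> lbox M" for M unfolding lbox_def by auto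
  have shell: "g x \<le> 2 powr q / real (Suc M) powr q" if x: "x \<in> lbox (Suc M) - lbox M" for x M
  proof -
    from x have int: "\<forall>i. x$i \<in> \<int>" unfolding lbox_def by auto
    from x int obtain i where i: "\<not> \<bar>x$i\<bar> \<le> real M" unfolding lbox_def by auto
    from int obtain k where k: "x$i = of_int k" by (meson Ints_cases)
    from i k have "\<bar>k\<bar> > int M" by linarith
    hence "\<bar>k\<bar> \<ge> int M + 1" by linarith
    hence "real_of_int (int M + 1) \<le> real_of_int \<bar>k\<bar>" by (simp only: of_int_le_iff)
    hence xi: "\<bar>x$i\<bar> \<ge> real M + 1" using k by simp
    have "\<bar>y$i\<bar> \<le> 1/2" using assms(1) by auto
    hence "\<bar>x$i + y$i\<bar> \<ge> real M + 1/2" using xi by linarith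
    moreover have "norm (x+y) \<ge> \<bar>(x+y)$i\<bar>" by (rule component_le_norm_cart)
    ultimately have nr: "norm (x+y) \<ge> real (Suc M) / 2" by simp
    have rpos: "real (Suc M) / 2 > 0" by simp
    have npos: "norm (x+y) > 0" using nr rpos by linarith
    have "(real (Suc M) / 2) powr q \<le> norm (x+y) powr q"
      by (rule powr_mono2) (use q2 nr in auto)
    hence "g x \<le> 1 / (real (Suc M) / 2) powr q"
      unfolding g_def using rpos npos by (intro divide_left_mono) auto
    also have "\<dots> = 2 powr q / real (Suc M) powr q" by (simp add: powr_divide)
    finally show ?thesis .
  qed
  have fin: "finite (lbox M :: (real^'n) set)" for M using box_fin_card by blast
  have step: "sum g (lbox M - {0}) \<le> K * (\<Sum>m=1..M. 1/(real m)^2)" for M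
  proof (induction M)
    case 0
    have e0: "(lbox 0 - {0} :: (real^'n) set) = {}"
      unfolding lbox_def by (auto simp: vec_eq_iff)
    have "sum g (lbox 0 - {0}) = 0" by (simp only: e0 sum.empty)
    then show ?case by simp
  next
    case (Suc M)
    define a where "a = real (Suc M)"
    have a1: "a \<ge> 1" unfolding a_def by simp
    have sub: "(lbox M - {0} :: (real^'n) set) \<subseteq> lbox (Suc M) - {0}" using mono by auto
    have "sum g (lbox (Suc M) - {0}) = sum g ((lbox (Suc M) - {0}) - (lbox M - {0})) + sum g (lbox M - {0})"
      by (rule sum.subset_diff[OF sub]) (use fin in auto)
    also have "(lbox (Suc M) - {0}) - (lbox M - {0}) = (lbox (Suc M) - lbox M :: (real^'n) set)" using z by auto
    finally have split: "sum g (lbox (Suc M) - {0}) = sum g (lbox (Suc M) - lbox M) + sum g (lbox M - {0})" .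
    have "sum g (lbox (Suc M) - lbox M) \<le> sum (\<lambda>_. 2 powr q / a powr q) (lbox (Suc M) - lbox M :: (real^'n) set)"
      by (rule sum_mono) (use shell a_def in auto)
    also have "\<dots> = real (card (lbox (Suc M) - lbox M :: (real^'n) set)) * (2 powr q / a powr q)" by simp
    also have "\<dots> \<le> real (card (lbox (Suc M) :: (real^'n) set)) * (2 powr q / a powr q)"
      by (intro mult_right_mono) (use fin in \<open>auto intro: card_mono\<close>)
    also have "\<dots> \<le> real ((2*Suc M+1) ^ d) * (2 powr q / a powr q)"
    proof (rule mult_right_mono)
      have c: "card (lbox (Suc M) :: (real^'n) set) \<le> (2*Suc M+1)^d"
        using box_fin_card[where M="Suc M" and 'n='n] unfolding d_def by blast
      show "real (card (lbox (Suc M) :: (real^'n) set)) \<le> real ((2*Suc M+1) ^ d)"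
        by (simp only: of_nat_le_iff c)
    qed simp
    also have "\<dots> \<le> (3 * a) ^ d * (2 powr q / a powr q)"
    proof (intro mult_right_mono)
      have "real ((2*Suc M+1) ^ d) = (2*a+1)^d" unfolding a_def by simp
      also have "\<dots> \<le> (3*a)^d" using a1 by (intro power_mono) auto
      finally show "real ((2*Suc M+1) ^ d) \<le> (3*a)^d" .
    qed simp
    also have "\<dots> = K * (a^d / a powr q)" unfolding K_def by (simp add: power_mult_distrib)
    also have "\<dots> \<le> K * (1 / a^2)"
    proof (intro mult_left_mono Knn)
      have "a^d * a^2 = a^(d+2)" by (rule power_add[symmetric])
      also have "\<dots> = a powr (real (d+2))" by (rule powr_realpow[symmetric]) (use a1 in simp)
      also have "real (d+2) = real d + 2" by simp
      finally have "a^d * a^2 = a powr (real d + 2)" .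
      also have "\<dots> \<le> a powr q" by (rule powr_mono) (use q2 a1 in auto)
      finally have "a^d * a^2 \<le> a powr q" .
      moreover have "a powr q > 0" using a1 by simp
      moreover have "a^2 > 0" using a1 by simp
      ultimately show "a^d / a powr q \<le> 1 / a^2" by (simp add: field_simps)
    qed
    finally have sh: "sum g (lbox (Suc M) - lbox M) \<le> K * (1 / a^2)" .
    have "(\<Sum>m=1..Suc M. 1/(real m)^2) = (\<Sum>m=1..M. 1/(real m)^2) + 1/a^2"
      unfolding a_def by simp
    then show ?case using split sh Suc.IH by (simp add: distrib_left)
  qed
  have bound: "sum g F \<le> 2 * K" if F: "finite F" "F \<subseteq> L" for F
  proof -
    define M where "M = Max (insert 0 ((\<lambda>(x,i). nat \<lceil>\<bar>(x::real^'n)$i\<bar>\<rceil>) ` (F \<times> UNIV))) + 1"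
    have M1: "M \<ge> 1" unfolding M_def by simp
    have FM: "F \<subseteq> lbox M - {0}"
    proof
      fix x assume x: "x \<in> F"
      with F have xL: "x \<in> L" by auto
      have "\<bar>x$i\<bar> \<le> real M" for i
      proof -
        have "nat \<lceil>\<bar>x$i\<bar>\<rceil> \<le> Max (insert 0 ((\<lambda>(x,i). nat \<lceil>\<bar>(x::real^'n)$i\<bar>\<rceil>) ` (F \<times> UNIV)))"
          by (rule Max_ge) (use F x in auto)
        hence "nat \<lceil>\<bar>x$i\<bar>\<rceil> \<le> M" unfolding M_def by linarith
        moreover have "\<bar>x$i\<bar> \<le> real (nat \<lceil>\<bar>x$i\<bar>\<rceil>)" by linarith
        ultimately show ?thesis by linarith
      qed
      with xL show "x \<in> lbox M - {0}" unfolding L_def lbox_def by auto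
    qed
    have "sum g F \<le> sum g (lbox M - {0})"
      by (rule sum_mono2) (use fin FM gnn in auto)
    also have "\<dots> \<le> K * (\<Sum>m=1..M. 1/(real m)^2)" by (rule step)
    also have "\<dots> \<le> K * 2"
    proof (intro mult_left_mono Knn)
      have "(\<Sum>m=1..M. 1/(real m)^2) \<le> 2 - 1/real M" by (rule inv_sq_sum[OF M1])
      also have "\<dots> \<le> 2" by simp
      finally show "(\<Sum>m=1..M. 1/(real m)^2) \<le> 2" .
    qed
    finally show ?thesis by simp
  qed
  have summ: "g summable_on L"
    by (rule nonneg_bdd_above_summable_on) (use gnn bound in \<open>auto intro!: bdd_aboveI[of _ "2*K"]\<close>)
  have "infsum g L \<le> 2 * K"
    by (rule infsum_le_finite_sums[OF summ]) (use bound in auto)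
  also have "2 * K \<le> ((1 + sqrt (real d)) * sqrt (real d + 3)) powr q"
    using final_ineq[OF d1, of q] assms(2) unfolding K_def d_def by (simp add: mult.commute mult.left_commute)
  finally show ?thesis using summ unfolding g_def L_def d_def by simp
qed

end
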